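(* Let $G$ be a road network with $n$ nodes and maximum degree $\Delta$, with random edge nuances as in the context. Let $i\in[0,h]$, let $B$ be a $4\times4$-cell region of $R_i$, and let $s$ be a node in $B$. Let $\zeta$ (resp. $\zeta'$) be the event that there exists another node $v$ such that the local shortest path from $s$ to $v$ (resp. from $v$ to $s$) in $B$ is not unique. Then $\Pr\{\zeta\vee\zeta'\}\le \binom{\Delta}{2}\cdot 2n/\tau$.
   Context: A road network $G$ is a directed, connected graph of bounded degree with $n$ nodes, each located at a point of the plane, each edge $e$ having positive length $l(e)$; $l(P)$ is the sum of edge lengths along a path. Grids: $R_h$ is a $4\times4$-cell grid tightly covering all nodes; each cell is recursively split into $2\times2$ cells until each cell contains at most one node, giving $h$ grids; for $i\in[0,h]$, $R_i$ denotes the square grid over the same square with $2^{h+2-i}\times2^{h+2-i}$ cells. A $4\times4$-cell region is a block of $4\times4$ consecutive cells. A path is a local path in $B$ if at most one of its edges (as a straight segment) intersects the boundary of $B$. Each edge $e$ receives an independent uniformly random integer nuance $\rho(e)\in\{0,\dots,\tau-1\}$, and $\rho(P)=\sum_{e\in P}\rho(e)$. Path $P_1$ is shorter than $P_2$ if $l(P_1)<l(P_2)$, or $l(P_1)=l(P_2)$ and $\rho(P_1)<\rho(P_2)$. A local shortest path from $s$ to $v$ in $B$ is a local path in $B$ from $s$ to $v$ not beaten in this order by any other such local path; it is not unique if two distinct such paths have equal length and equal nuance. *)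

theory Defs
  imports "HOL-Probability.Probability"
begin

text \<open>Node positions are assumed pairwise distinct (needed for the grid hierarchy to terminate).\<close>

definition road_network ::
  "'v set \<Rightarrow> ('v \<times> 'v) set \<Rightarrow> ('v \<Rightarrow> real \<times> real) \<Rightarrow> ('v \<times> 'v \<Rightarrow> real) \<Rightarrow> bool" where
  "road_network V E pos l \<longleftrightarrow>
     finite V \<and> V \<noteq> {} \<and> E \<subseteq> V \<times> V \<and>
     (\<forall>u\<in>V. \<forall>w\<in>V. (u, w) \<in> (E \<union> E\<inverse>)\<^sup>*) \<and>
     (\<forall>e\<in>E. 0 < l e) \<and> inj_on pos V"

definition degree :: "('v \<times> 'v) set \<Rightarrow> 'v \<Rightarrow> nat" where
  "degree E u = card {e \<in> E. fst e = u \<or> snd e = u}"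

definition max_degree :: "'v set \<Rightarrow> ('v \<times> 'v) set \<Rightarrow> nat" where
  "max_degree V E = Max (degree E ` V)"

definition path_edges :: "'v list \<Rightarrow> ('v \<times> 'v) list" where
  "path_edges p = zip p (tl p)"

definition is_path :: "('v \<times> 'v) set \<Rightarrow> 'v \<Rightarrow> 'v \<Rightarrow> 'v list \<Rightarrow> bool" where
  "is_path E s t p \<longleftrightarrow> p \<noteq> [] \<and> hd p = s \<and> last p = t \<and> distinct p \<and> set (path_edges p) \<subseteq> E"

definition plen :: "('v \<times> 'v \<Rightarrow> real) \<Rightarrow> 'v list \<Rightarrow> real" where
  "plen l p = sum_list (map l (path_edges p))"

definition pnu :: "('v \<times> 'v \<Rightarrow> nat) \<Rightarrow> 'v list \<Rightarrow> nat" where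
  "pnu \<rho> p = sum_list (map \<rho> (path_edges p))"

definition path_shorter :: "('v \<times> 'v \<Rightarrow> real) \<Rightarrow> ('v \<times> 'v \<Rightarrow> nat) \<Rightarrow> 'v list \<Rightarrow> 'v list \<Rightarrow> bool" where
  "path_shorter l \<rho> p q \<longleftrightarrow> plen l p < plen l q \<or> (plen l p = plen l q \<and> pnu \<rho> p < pnu \<rho> q)"

definition local_path ::
  "('v \<Rightarrow> real \<times> real) \<Rightarrow> ('v \<times> 'v) set \<Rightarrow> (real \<times> real) set \<Rightarrow> 'v \<Rightarrow> 'v \<Rightarrow> 'v list \<Rightarrow> bool" where
  "local_path pos E B s t p \<longleftrightarrow> is_path E s t p \<and>
     length (filter (\<lambda>(u, w). closed_segment (pos u) (pos w) \<inter> frontier B \<noteq> {}) (path_edges p)) \<le> 1"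

definition local_shortest ::
  "('v \<Rightarrow> real \<times> real) \<Rightarrow> ('v \<times> 'v) set \<Rightarrow> ('v \<times> 'v \<Rightarrow> real) \<Rightarrow> ('v \<times> 'v \<Rightarrow> nat) \<Rightarrow>
   (real \<times> real) set \<Rightarrow> 'v \<Rightarrow> 'v \<Rightarrow> 'v list \<Rightarrow> bool" where
  "local_shortest pos E l \<rho> B s t p \<longleftrightarrow> local_path pos E B s t p \<and>
     \<not> (\<exists>q. local_path pos E B s t q \<and> path_shorter l \<rho> q p)"

definition lsp_not_unique ::
  "('v \<Rightarrow> real \<times> real) \<Rightarrow> ('v \<times> 'v) set \<Rightarrow> ('v \<times> 'v \<Rightarrow> real) \<Rightarrow> ('v \<times> 'v \<Rightarrow> nat) \<Rightarrow>
   (real \<times> real) set \<Rightarrow> 'v \<Rightarrow> 'v \<Rightarrow> bool" where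
  "lsp_not_unique pos E l \<rho> B s t \<longleftrightarrow>
     (\<exists>p q. p \<noteq> q \<and> local_shortest pos E l \<rho> B s t p \<and> local_shortest pos E l \<rho> B s t q \<and>
            plen l p = plen l q \<and> pnu \<rho> p = pnu \<rho> q)"

definition tight_cover :: "'v set \<Rightarrow> ('v \<Rightarrow> real \<times> real) \<Rightarrow> real \<Rightarrow> real \<Rightarrow> real \<Rightarrow> bool" where
  "tight_cover V pos x0 y0 L \<longleftrightarrow>
     (\<forall>u\<in>V. fst (pos u) \<in> {x0..x0 + L} \<and> snd (pos u) \<in> {y0..y0 + L}) \<and>
     L = max (Max ((fst \<circ> pos) ` V) - Min ((fst \<circ> pos) ` V))
             (Max ((snd \<circ> pos) ` V) - Min ((snd \<circ> pos) ` V))"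

text \<open>Index (0..m-1) of the half-open cell containing coordinate x, when [x0,x0+L]
  is divided into m equal cells (the last cell is closed).\<close>

definition cell_idx :: "real \<Rightarrow> real \<Rightarrow> nat \<Rightarrow> real \<Rightarrow> nat" where
  "cell_idx x0 L m x = min (m - 1) (nat \<lfloor>(x - x0) / L * real m\<rfloor>)"

definition cells_separate :: "'v set \<Rightarrow> ('v \<Rightarrow> real \<times> real) \<Rightarrow> real \<Rightarrow> real \<Rightarrow> real \<Rightarrow> nat \<Rightarrow> bool" where
  "cells_separate V pos x0 y0 L m \<longleftrightarrow>
     (\<forall>u\<in>V. \<forall>w\<in>V. u \<noteq> w \<longrightarrow>
        (cell_idx x0 L m (fst (pos u)), cell_idx y0 L m (snd (pos u))) \<noteq>
        (cell_idx x0 L m (fst (pos w)), cell_idx y0 L m (snd (pos w))))"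

text \<open>h: number of halvings of the 4x4 grid R_h needed until every cell holds at most one node;
  R_i has 2^(h+2-i) cells per side.\<close>

definition grid_height :: "'v set \<Rightarrow> ('v \<Rightarrow> real \<times> real) \<Rightarrow> real \<Rightarrow> real \<Rightarrow> real \<Rightarrow> nat" where
  "grid_height V pos x0 y0 L = (LEAST k. cells_separate V pos x0 y0 L (2 ^ (k + 2)))"

definition is_4x4_region :: "real \<Rightarrow> real \<Rightarrow> real \<Rightarrow> nat \<Rightarrow> (real \<times> real) set \<Rightarrow> bool" where
  "is_4x4_region x0 y0 L m B \<longleftrightarrow>
     (\<exists>a b :: nat. a + 4 \<le> m \<and> b + 4 \<le> m \<and>
        B = {x0 + real a * (L / real m) .. x0 + real (a + 4) * (L / real m)} \<times>
            {y0 + real b * (L / real m) .. y0 + real (b + 4) * (L / real m)})"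

end

theory Submission
  imports Defs
begin


lemma isolation:
  fixes E :: "'e set" and A :: "('e \<Rightarrow> nat) set"
  assumes fin: "finite E" and eE: "e \<in> E" and tau: "0 < \<tau>"
    and uniq: "\<And>\<rho> \<rho>'. \<rho> \<in> A \<Longrightarrow> \<rho>' \<in> A \<Longrightarrow> (\<And>x. x \<noteq> e \<Longrightarrow> \<rho> x = \<rho>' x) \<Longrightarrow> \<rho> e = \<rho>' e"
  shows "measure_pmf.prob (Pi_pmf E 0 (\<lambda>_. pmf_of_set {..<\<tau>})) A \<le> 1 / real \<tau>"
proof -
  define F where "F = PiE_dflt E 0 (\<lambda>_. {..<\<tau>})"
  have M: "Pi_pmf E 0 (\<lambda>_. pmf_of_set {..<\<tau>}) = pmf_of_set F"
    unfolding F_def using fin tau by (intro Pi_pmf_of_set) auto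
  have finF: "finite F" unfolding F_def using fin by (intro finite_PiE_dflt) auto
  have F0: "(\<lambda>_. 0) \<in> F" unfolding F_def PiE_dflt_def using tau by auto
  hence Fne: "F \<noteq> {}" by auto
  define G where "G = {f \<in> F. f e = 0}"
  have bij: "bij_betw (\<lambda>(y,f). f(e:=y)) ({..<\<tau>} \<times> G) F"
  proof (rule bij_betw_byWitness[where f'="\<lambda>f. (f e, f(e:=0))"])
    show "\<forall>a\<in>{..<\<tau>} \<times> G. (\<lambda>f. (f e, f(e := 0))) ((\<lambda>(y, f). f(e := y)) a) = a"
      by (auto simp: G_def)
    show "\<forall>a'\<in>F. (\<lambda>(y, f). f(e := y)) ((\<lambda>f. (f e, f(e := 0))) a') = a'" by auto
    show "(\<lambda>(y, f). f(e := y)) ` ({..<\<tau>} \<times> G) \<subseteq> F"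
      using eE by (auto simp: G_def F_def PiE_dflt_def)
    show "(\<lambda>f. (f e, f(e := 0))) ` F \<subseteq> {..<\<tau>} \<times> G"
      using eE tau by (auto simp: G_def F_def PiE_dflt_def)
  qed
  have cardF: "card F = \<tau> * card G"
    using bij_betw_same_card[OF bij] by (simp add: card_cartesian_product)
  have "card (F \<inter> A) \<le> card G"
  proof (rule card_inj_on_le[where f="\<lambda>f. f(e:=0)"])
    show "inj_on (\<lambda>f. f(e := 0)) (F \<inter> A)"
    proof (rule inj_onI)
      fix x y assume x: "x \<in> F \<inter> A" and y: "y \<in> F \<inter> A" and eq: "x(e := 0) = y(e := 0)"
      have "\<And>z. z \<noteq> e \<Longrightarrow> x z = y z" using eq by (metis fun_upd_other)
      hence "x e = y e" using uniq x y by auto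
      thus "x = y" using eq by (metis fun_upd_triv fun_upd_upd)
    qed
    show "(\<lambda>f. f(e := 0)) ` (F \<inter> A) \<subseteq> G"
      using eE tau by (auto simp: G_def F_def PiE_dflt_def)
    show "finite G" using finF by (simp add: G_def)
  qed
  moreover have "card G > 0" using cardF finF Fne by (metis card_0_eq mult_0_right neq0_conv)
  ultimately have "real (card (F \<inter> A)) / real (card F) \<le> 1 / real \<tau>"
    using tau by (simp add: cardF divide_simps)
  thus ?thesis by (simp add: M measure_pmf_of_set[OF Fne finF])
qed



lemma pe_simps[simp]: "path_edges [] = []" "path_edges [x] = []"
  "path_edges (x # y # xs) = (x, y) # path_edges (y # xs)"
  by (simp_all add: path_edges_def)

lemma pe_append: "path_edges (xs @ y # ys) = path_edges (xs @ [y]) @ path_edges (y # ys)"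
proof (induction xs)
  case Nil then show ?case by simp
next
  case (Cons a xs) then show ?case by (cases xs) auto
qed

lemma pe_snoc: "xs \<noteq> [] \<Longrightarrow> path_edges (xs @ [y]) = path_edges xs @ [(last xs, y)]"
proof (induction xs)
  case Nil then show ?case by simp
next
  case (Cons a xs) then show ?case by (cases xs) auto
qed

lemma pe_Cons: "p \<noteq> [] \<Longrightarrow> path_edges (a # p) = (a, hd p) # path_edges p"
  by (cases p) auto

lemma pe_rev: "path_edges (rev p) = rev (map prod.swap (path_edges p))"
proof (induction p)
  case Nil then show ?case by simp
next
  case (Cons a p)
  show ?case
  proof (cases "p = []")
    case True then show ?thesis by simp
  next
    case False
    have "path_edges (rev (a # p)) = path_edges (rev p @ [a])" by simp
    also have "\<dots> = path_edges (rev p) @ [(last (rev p), a)]" using False by (simp add: pe_snoc)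
    also have "\<dots> = rev (map prod.swap (path_edges (a # p)))"
      using False Cons.IH by (simp add: pe_Cons last_rev)
    finally show ?thesis .
  qed
qed

lemma set_tl_sub: "set (tl xs) \<subseteq> set xs"
  by (cases xs) auto

lemma pe_set: "(a, b) \<in> set (path_edges p) \<Longrightarrow> a \<in> set p \<and> b \<in> set p"
  unfolding path_edges_def using set_zip_leftD set_zip_rightD set_tl_sub by fastforce

lemma pe_distinct: "distinct p \<Longrightarrow> distinct (path_edges p)"
proof (induction p rule: induct_list012)
  case (3 x y zs)
  have "x \<notin> set (y # zs)" using "3.prems" by simp
  hence "(x, y) \<notin> set (path_edges (y # zs))" using pe_set by metis
  then show ?case using 3 by simp
qed auto

definition bad :: "('v \<Rightarrow> real \<times> real) \<Rightarrow> (real \<times> real) set \<Rightarrow> 'v \<times> 'v \<Rightarrow> bool" where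
  "bad pos B = (\<lambda>(u, w). closed_segment (pos u) (pos w) \<inter> frontier B \<noteq> {})"

definition cross :: "('v \<Rightarrow> real \<times> real) \<Rightarrow> (real \<times> real) set \<Rightarrow> 'v list \<Rightarrow> nat" where
  "cross pos B p = length (filter (bad pos B) (path_edges p))"

lemma local_path_cross: "local_path pos E B s t p \<longleftrightarrow> is_path E s t p \<and> cross pos B p \<le> 1"
  by (simp add: local_path_def cross_def bad_def)

lemma cross_append: "cross pos B (xs @ y # ys) = cross pos B (xs @ [y]) + cross pos B (y # ys)"
  unfolding cross_def pe_append[of xs y ys] by simp

lemma plen_append: "plen l (xs @ y # ys) = plen l (xs @ [y]) + plen l (y # ys)"
  unfolding plen_def pe_append[of xs y ys] by simp

lemma pnu_append: "pnu r (xs @ y # ys) = pnu r (xs @ [y]) + pnu r (y # ys)"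
  unfolding pnu_def pe_append[of xs y ys] by simp

lemma bad_swap: "bad pos B (prod.swap e) = bad pos B e"
  by (cases e) (simp add: bad_def closed_segment_commute)

lemma cross_rev: "cross pos B (rev p) = cross pos B p"
proof -
  have "bad pos B \<circ> prod.swap = bad pos B" by (rule ext) (simp add: bad_swap)
  then show ?thesis by (simp add: cross_def pe_rev filter_map rev_filter[symmetric])
qed

section \<open>Geometry\<close>

context
  fixes pos :: "'v \<Rightarrow> real \<times> real" and B :: "(real \<times> real) set"
  assumes clB: "closed B" and cvB: "convex B"
begin

lemma F1: "pos u \<in> interior B \<Longrightarrow> pos t \<in> interior B \<Longrightarrow> \<not> bad pos B (u, t)"
proof -
  assume a: "pos u \<in> interior B" "pos t \<in> interior B"
  have "closed_segment (pos u) (pos t) \<subseteq> interior B"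
    using a cvB by (intro closed_segment_subset) auto
  thus ?thesis by (auto simp: bad_def frontier_def)
qed

lemma B_split: "x \<in> B \<Longrightarrow> x \<notin> frontier B \<Longrightarrow> x \<in> interior B"
  using clB by (auto simp: frontier_def)

lemma F2: "pos u \<in> interior B \<Longrightarrow> \<not> bad pos B (u, t) \<Longrightarrow> pos t \<in> interior B"
proof -
  assume a: "pos u \<in> interior B" and nb: "\<not> bad pos B (u, t)"
  let ?S = "closed_segment (pos u) (pos t)"
  have "?S \<inter> B \<noteq> {}" using a interior_subset by fastforce
  moreover have "?S \<inter> frontier B = {}" using nb by (simp add: bad_def)
  ultimately have "\<not> (?S - B \<noteq> {})" using connected_Int_frontier[of ?S B] by auto
  hence "pos t \<in> B" by auto
  moreover have "pos t \<notin> frontier B" using \<open>?S \<inter> frontier B = {}\<close> by auto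
  ultimately show ?thesis using B_split by auto
qed

lemma F2': "pos u \<notin> B \<Longrightarrow> \<not> bad pos B (u, t) \<Longrightarrow> pos t \<notin> B"
proof
  assume a: "pos u \<notin> B" and nb: "\<not> bad pos B (u, t)" and t: "pos t \<in> B"
  let ?S = "closed_segment (pos u) (pos t)"
  have "?S \<inter> B \<noteq> {}" using t by fastforce
  moreover have "?S - B \<noteq> {}" using a by fastforce
  ultimately have "?S \<inter> frontier B \<noteq> {}" using connected_Int_frontier[of ?S B] by auto
  thus False using nb by (simp add: bad_def)
qed

lemma F3: "pos u \<in> frontier B \<Longrightarrow> bad pos B (u, t)"
  by (auto simp: bad_def)

lemma cross_snoc: "x \<noteq> [] \<Longrightarrow> cross pos B (x @ [t]) = cross pos B x + (if bad pos B (last x, t) then 1 else 0)"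
  by (simp add: cross_def pe_snoc)

lemma interior_inv:
  assumes "pos s \<in> interior B"
  shows "x \<noteq> [] \<Longrightarrow> hd x = s \<Longrightarrow> cross pos B x \<le> 1 \<Longrightarrow>
     (cross pos B x = 0 \<longrightarrow> pos (last x) \<in> interior B) \<and> (cross pos B x = 1 \<longrightarrow> pos (last x) \<notin> interior B)"
proof (induction x rule: rev_induct)
  case Nil then show ?case by simp
next
  case (snoc t x)
  show ?case
  proof (cases "x = []")
    case True then show ?thesis using snoc.prems assms by (simp add: cross_def)
  next
    case False
    have c: "cross pos B (x @ [t]) = cross pos B x + (if bad pos B (last x, t) then 1 else 0)"
      using cross_snoc[OF False] .
    have hx: "hd x = s" using snoc.prems(2) False by simp
    have cx: "cross pos B x \<le> 1" using snoc.prems(3) c by linarith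
    note IH = snoc.IH[OF False hx cx]
    show ?thesis
    proof (cases "cross pos B x = 0")
      case x0: True
      hence li: "pos (last x) \<in> interior B" using IH by blast
      show ?thesis
      proof (cases "bad pos B (last x, t)")
        case True
        hence "pos t \<notin> interior B" using F1 li by blast
        then show ?thesis using c x0 True by simp
      next
        case False
        hence "pos t \<in> interior B" using F2 li by blast
        then show ?thesis using c x0 False by simp
      qed
    next
      case False
      hence x1: "cross pos B x = 1" using cx by linarith
      have nb: "\<not> bad pos B (last x, t)" using c snoc.prems(3) x1 by (auto split: if_splits)
      hence "pos (last x) \<notin> frontier B" using F3 by blast
      moreover have "pos (last x) \<notin> interior B" using IH x1 by blast
      ultimately have "pos (last x) \<notin> B" using B_split by blast
      hence "pos t \<notin> B" using F2' nb by blast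
      hence "pos t \<notin> interior B" using interior_subset by blast
      then show ?thesis using c nb x1 by simp
    qed
  qed
qed

definition gcr :: "'v \<Rightarrow> 'v \<Rightarrow> nat" where
  "gcr s w = (if pos s \<in> frontier B then (if w = s then 0 else 1) else (if pos w \<in> interior B then 0 else 1))"

lemma distinct_hd_last: "distinct x \<Longrightarrow> x \<noteq> [] \<Longrightarrow> hd x = last x \<Longrightarrow> x = [hd x]"
  by (cases x) (auto split: if_splits)

lemma cross_det:
  assumes "pos s \<in> B" "x \<noteq> []" "hd x = s" "distinct x" "cross pos B x \<le> 1"
  shows "cross pos B x = gcr s (last x)"
proof (cases "pos s \<in> frontier B")
  case fr: True
  show ?thesis
  proof (cases "last x = s")
    case True
    hence "x = [s]" using distinct_hd_last assms by metis
    then show ?thesis using fr by (simp add: gcr_def cross_def)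
  next
    case False
    obtain y r where x: "x = s # y # r"
    proof (cases x)
      case Nil then show ?thesis using assms by simp
    next
      case (Cons a r1)
      then show ?thesis using that assms False by (cases r1) auto
    qed
    have "bad pos B (s, y)" using F3 fr by blast
    hence "cross pos B x \<ge> 1" by (simp add: x cross_def)
    then show ?thesis using assms(5) False fr by (simp add: gcr_def)
  qed
next
  case False
  hence si: "pos s \<in> interior B" using B_split assms by blast
  show ?thesis using interior_inv[OF si assms(2,3,5)] assms(5) False
    by (auto simp: gcr_def)
qed

end



lemma plen_nonneg: "\<forall>e\<in>E. 0 < l e \<Longrightarrow> set (path_edges p) \<subseteq> E \<Longrightarrow> 0 \<le> plen l p"
  unfolding plen_def by (intro sum_list_nonneg) (auto intro: less_imp_le)

lemma plen_pos: "\<forall>e\<in>E. 0 < l e \<Longrightarrow> set (path_edges (ra @ [z])) \<subseteq> E \<Longrightarrow> ra \<noteq> [] \<Longrightarrow> 0 < plen l (ra @ [z])"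
proof -
  assume a: "\<forall>e\<in>E. 0 < l e" "set (path_edges (ra @ [z])) \<subseteq> E" "ra \<noteq> []"
  have pe: "path_edges (ra @ [z]) = path_edges ra @ [(last ra, z)]" using a(3) by (simp add: pe_snoc)
  have "0 \<le> plen l ra" using a pe by (intro plen_nonneg[of E]) auto
  moreover have "0 < l (last ra, z)" using a pe by auto
  ultimately show ?thesis using pe by (simp add: plen_def)
qed

lemma pe_sub1: "set (path_edges (xs @ [y])) \<subseteq> set (path_edges (xs @ y # ys))"
  by (simp add: pe_append[of xs y ys])

lemma pe_sub2: "set (path_edges (y # ys)) \<subseteq> set (path_edges (xs @ y # ys))"
  by (simp add: pe_append[of xs y ys])

lemma distinct_last_split: "distinct (xa @ z # xb) \<Longrightarrow> last (xa @ z # xb) = z \<Longrightarrow> xb = []"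
  by (cases xb rule: rev_cases) auto

lemma prefix_opt:
  assumes clB: "closed B" and cvB: "convex B" and sB: "pos s \<in> B" and lpos: "\<forall>e\<in>E. 0 < l e"
    and LS: "local_shortest pos E l \<rho> B s v (p1 @ w # r)"
  shows "local_shortest pos E l \<rho> B s w (p1 @ [w])"
proof -
  let ?p = "p1 @ w # r"
  have lp: "local_path pos E B s v ?p" using LS by (simp add: local_shortest_def)
  hence ip: "is_path E s v ?p" and cp: "cross pos B ?p \<le> 1" by (auto simp: local_path_cross)
  have cpsplit: "cross pos B ?p = cross pos B (p1 @ [w]) + cross pos B (w # r)" by (rule cross_append)
  have lp1: "local_path pos E B s w (p1 @ [w])"
    unfolding local_path_cross is_path_def
    using ip cp cpsplit pe_sub1[of p1 w r] by (auto simp: is_path_def hd_append)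
  show ?thesis
  proof (unfold local_shortest_def, intro conjI lp1 notI, elim exE conjE)
    fix x assume lx: "local_path pos E B s w x" and sh: "path_shorter l \<rho> x (p1 @ [w])"
    hence ix: "is_path E s w x" and cx: "cross pos B x \<le> 1" by (auto simp: local_path_cross)
    have cxeq: "cross pos B x = cross pos B (p1 @ [w])"
      using cross_det[where B=B and pos=pos and s=s and x=x, OF clB cvB sB] cross_det[where B=B and pos=pos and s=s and x="p1 @ [w]", OF clB cvB sB] ix cx lp1
      by (auto simp: local_path_cross is_path_def)
    have "w \<in> set (w # r)" by simp
    moreover have wx: "w = last x" "x \<noteq> []" using ix by (auto simp: is_path_def)
    ultimately have "\<exists>z\<in>set x. z \<in> set (w # r)" by auto
    then obtain xa z xb where x: "x = xa @ z # xb" and zr: "z \<in> set (w # r)" and xa: "\<forall>y\<in>set xa. y \<notin> set (w # r)"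
      using split_list_first_prop[of x "\<lambda>z. z \<in> set (w # r)"] by blast
    obtain ra rb where r': "w # r = ra @ z # rb" using split_list[OF zr] by blast
    define y where "y = xa @ z # rb"
    have dp: "distinct ?p" using ip by (simp add: is_path_def)
    hence dr: "distinct (w # r)" by simp
    hence drb: "distinct (z # rb)" using r' by (metis distinct_append)
    have dx: "distinct x" using ix by (simp add: is_path_def)
    have hy: "hd y = s" using ix x by (cases xa) (auto simp: y_def is_path_def)
    have ly: "last y = v"
    proof -
      have "last (w # r) = v" using ip by (simp add: is_path_def)
      thus ?thesis using r' by (simp add: y_def)
    qed
    have dy: "distinct y" unfolding y_def using dx drb xa x r' by auto
    have ey: "set (path_edges y) \<subseteq> E"
    proof -
      have "set (path_edges y) = set (path_edges (xa @ [z])) \<union> set (path_edges (z # rb))"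
        by (simp add: y_def pe_append[of xa z rb])
      also have "\<dots> \<subseteq> set (path_edges x) \<union> set (path_edges (w # r))"
        using pe_sub1[of xa z xb] pe_sub2[of z rb ra] x r' by auto
      also have "\<dots> \<subseteq> E" using ix ip pe_sub2[of w r p1] by (auto simp: is_path_def)
      finally show ?thesis .
    qed
    have cy: "cross pos B y \<le> 1"
    proof -
      have "cross pos B y = cross pos B (xa @ [z]) + cross pos B (z # rb)"
        unfolding y_def by (rule cross_append)
      moreover have "cross pos B x = cross pos B (xa @ [z]) + cross pos B (z # xb)"
        unfolding x by (rule cross_append)
      moreover have "cross pos B (w # r) = cross pos B (ra @ [z]) + cross pos B (z # rb)"
        unfolding r' by (rule cross_append)
      ultimately show ?thesis using cxeq cpsplit cp by linarith
    qed
    have ly': "local_path pos E B s v y"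
      unfolding local_path_cross is_path_def using hy ly dy ey cy by (auto simp: y_def)
    have ex: "set (path_edges x) \<subseteq> E" using ix by (simp add: is_path_def)
    have er: "set (path_edges (w # r)) \<subseteq> E" using ip pe_sub2[of w r p1] by (auto simp: is_path_def)
    have pl1: "plen l y = plen l (xa @ [z]) + plen l (z # rb)" unfolding y_def by (rule plen_append)
    have pl2: "plen l x = plen l (xa @ [z]) + plen l (z # xb)" unfolding x by (rule plen_append)
    have pl3: "plen l (w # r) = plen l (ra @ [z]) + plen l (z # rb)" unfolding r' by (rule plen_append)
    have pl4: "plen l ?p = plen l (p1 @ [w]) + plen l (w # r)" by (rule plen_append)
    have nn: "0 \<le> plen l (z # xb)" using ex pe_sub2[of z xb xa] x by (intro plen_nonneg[OF lpos]) auto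
    have "path_shorter l \<rho> y ?p"
    proof (cases "ra = []")
      case True
      hence zw: "z = w" and rbr: "rb = r" using r' by auto
      hence "xb = []" using distinct_last_split[of xa z xb] dx x wx by simp
      hence yx: "y = x @ r" using zw rbr x by (simp add: y_def)
      have "plen l y = plen l x + plen l (w # r)" using pl1 x zw rbr \<open>xb = []\<close> by simp
      moreover have "pnu \<rho> y = pnu \<rho> (xa @ [z]) + pnu \<rho> (z # rb)" unfolding y_def by (rule pnu_append)
      hence "pnu \<rho> y = pnu \<rho> x + pnu \<rho> (w # r)" using x zw rbr \<open>xb = []\<close> by simp
      moreover have "pnu \<rho> ?p = pnu \<rho> (p1 @ [w]) + pnu \<rho> (w # r)" by (rule pnu_append)
      ultimately show ?thesis using sh pl4 by (auto simp: path_shorter_def)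
    next
      case False
      have "0 < plen l (ra @ [z])" using er r' pe_sub1[of ra z rb] False by (intro plen_pos[OF lpos]) auto
      moreover have "plen l x \<le> plen l (p1 @ [w])" using sh by (auto simp: path_shorter_def)
      ultimately have "plen l y < plen l ?p" using pl1 pl2 pl3 pl4 nn by linarith
      thus ?thesis by (simp add: path_shorter_def)
    qed
    thus False using LS ly' by (auto simp: local_shortest_def)
  qed
qed



lemma lcp:
  "hd P = hd Q \<Longrightarrow> P \<noteq> [] \<Longrightarrow> Q \<noteq> [] \<Longrightarrow> P \<noteq> Q \<Longrightarrow>
   \<exists>pre P2 Q2. P = pre @ P2 \<and> Q = pre @ Q2 \<and> pre \<noteq> [] \<and> P2 \<noteq> Q2 \<and> (P2 = [] \<or> Q2 = [] \<or> hd P2 \<noteq> hd Q2)"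
proof (induction P arbitrary: Q)
  case Nil then show ?case by simp
next
  case (Cons a P')
  then obtain Q' where Q: "Q = a # Q'" by (cases Q) auto
  show ?case
  proof (cases "P' = [] \<or> Q' = [] \<or> hd P' \<noteq> hd Q'")
    case True
    then show ?thesis using Cons.prems Q by (intro exI[of _ "[a]"] exI[of _ P'] exI[of _ Q']) auto
  next
    case False
    then obtain pre P2 Q2 where "P' = pre @ P2 \<and> Q' = pre @ Q2 \<and> pre \<noteq> [] \<and> P2 \<noteq> Q2 \<and> (P2 = [] \<or> Q2 = [] \<or> hd P2 \<noteq> hd Q2)"
      using Cons.IH[of Q'] Cons.prems Q by auto
    then show ?thesis using Q by (intro exI[of _ "a # pre"] exI[of _ P2] exI[of _ Q2]) auto
  qed
qed

definition Aev where
  "Aev pos E l B \<rho> x y e \<longleftrightarrow> (\<exists>p q. local_shortest pos E l \<rho> B x y p \<and> local_shortest pos E l \<rho> B x y q \<and>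
      e \<in> set (path_edges p) \<and> e \<notin> set (path_edges q) \<and> pnu \<rho> p = pnu \<rho> q)"

lemma core_fwd:
  assumes clB: "closed B" and cvB: "convex B" and sB: "pos s \<in> B" and lpos: "\<forall>e\<in>E. 0 < l e"
    and nu: "lsp_not_unique pos E l \<rho> B s v"
  shows "\<exists>a b w. a \<noteq> b \<and> (a, w) \<in> E \<and> (b, w) \<in> E \<and> Aev pos E l B \<rho> s w (a, w) \<and> Aev pos E l B \<rho> s w (b, w)"
proof -
  obtain p q where pq: "p \<noteq> q" and Lp: "local_shortest pos E l \<rho> B s v p" and Lq: "local_shortest pos E l \<rho> B s v q"
    and eql: "plen l p = plen l q" and eqn: "pnu \<rho> p = pnu \<rho> q"
    using nu by (auto simp: lsp_not_unique_def)
  have ip: "is_path E s v p" and iq: "is_path E s v q" using Lp Lq by (auto simp: local_shortest_def local_path_def)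
  have "hd (rev p) = hd (rev q)" "rev p \<noteq> []" "rev q \<noteq> []" "rev p \<noteq> rev q"
    using ip iq pq by (auto simp: is_path_def hd_rev)
  then obtain pre P2 Q2 where rp: "rev p = pre @ P2" and rq: "rev q = pre @ Q2" and pre: "pre \<noteq> []"
    and PQ: "P2 \<noteq> Q2" and hdd: "P2 = [] \<or> Q2 = [] \<or> hd P2 \<noteq> hd Q2"
    using lcp by blast
  obtain w r where wr: "rev pre = w # r" using pre by (cases "rev pre") auto
  define p1 where "p1 = rev P2"
  define q1 where "q1 = rev Q2"
  have p: "p = p1 @ w # r" using rp wr p1_def by (metis rev_append rev_rev_ident)
  have q: "q = q1 @ w # r" using rq wr q1_def by (metis rev_append rev_rev_ident)
  have dp: "distinct p" and dq: "distinct q" using ip iq by (auto simp: is_path_def)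
  have hp: "hd p = s" and hq: "hd q = s" using ip iq by (auto simp: is_path_def)
  have p1ne: "p1 \<noteq> []"
  proof
    assume "p1 = []"
    hence "q1 \<noteq> []" using PQ p1_def q1_def by auto
    hence "hd q = hd q1" using q by simp
    moreover have "hd p = w" using p \<open>p1 = []\<close> by simp
    ultimately have "hd q1 = w" using hp hq by simp
    hence "w \<in> set q1" using \<open>q1 \<noteq> []\<close> by (metis hd_in_set)
    thus False using dq q by simp
  qed
  have q1ne: "q1 \<noteq> []"
  proof
    assume "q1 = []"
    hence "p1 \<noteq> []" using PQ p1_def q1_def by auto
    hence "hd p = hd p1" using p by simp
    moreover have "hd q = w" using q \<open>q1 = []\<close> by simp
    ultimately have "hd p1 = w" using hp hq by simp
    hence "w \<in> set p1" using \<open>p1 \<noteq> []\<close> by (metis hd_in_set)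
    thus False using dp p by simp
  qed
  define a where "a = last p1"
  define b where "b = last q1"
  have ab: "a \<noteq> b" using hdd p1ne q1ne by (auto simp: a_def b_def p1_def q1_def last_rev)
  have Lp1: "local_shortest pos E l \<rho> B s w (p1 @ [w])" using prefix_opt[where pos=pos and B=B and s=s and E=E and l=l, OF clB cvB sB lpos] Lp p by simp
  have Lq1: "local_shortest pos E l \<rho> B s w (q1 @ [w])" using prefix_opt[where pos=pos and B=B and s=s and E=E and l=l, OF clB cvB sB lpos] Lq q by simp
  have "pnu \<rho> p = pnu \<rho> (p1 @ [w]) + pnu \<rho> (w # r)" unfolding p by (rule pnu_append)
  moreover have "pnu \<rho> q = pnu \<rho> (q1 @ [w]) + pnu \<rho> (w # r)" unfolding q by (rule pnu_append)
  ultimately have eqn1: "pnu \<rho> (p1 @ [w]) = pnu \<rho> (q1 @ [w])" using eqn by simp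
  have ep: "path_edges (p1 @ [w]) = path_edges p1 @ [(a, w)]" using p1ne by (simp add: pe_snoc a_def)
  have eq: "path_edges (q1 @ [w]) = path_edges q1 @ [(b, w)]" using q1ne by (simp add: pe_snoc b_def)
  have wp1: "w \<notin> set p1" using dp p by simp
  have wq1: "w \<notin> set q1" using dq q by simp
  have a1: "(a, w) \<in> set (path_edges (p1 @ [w]))" "(a, w) \<notin> set (path_edges (q1 @ [w]))"
    using ep eq ab wq1 pe_set[of a w q1] by auto
  have b1: "(b, w) \<in> set (path_edges (q1 @ [w]))" "(b, w) \<notin> set (path_edges (p1 @ [w]))"
    using ep eq ab wp1 pe_set[of b w p1] by auto
  have "set (path_edges (p1 @ [w])) \<subseteq> E" using ip pe_sub1[of p1 w r] p by (auto simp: is_path_def)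
  hence aE: "(a, w) \<in> E" using a1 by auto
  have "set (path_edges (q1 @ [w])) \<subseteq> E" using iq pe_sub1[of q1 w r] q by (auto simp: is_path_def)
  hence bE: "(b, w) \<in> E" using b1 by auto
  have "Aev pos E l B \<rho> s w (a, w)" unfolding Aev_def using Lp1 Lq1 a1 eqn1 by blast
  moreover have "Aev pos E l B \<rho> s w (b, w)" unfolding Aev_def using Lp1 Lq1 b1 eqn1 by metis
  ultimately show ?thesis using ab aE bE by blast
qed

lemma pnu_change:
  fixes \<rho> \<rho>' :: "'a \<Rightarrow> nat"
  shows "distinct es \<Longrightarrow> (\<And>z. z \<noteq> e \<Longrightarrow> \<rho> z = \<rho>' z) \<Longrightarrow>
   sum_list (map \<rho> es) + (if e \<in> set es then \<rho>' e else 0) = sum_list (map \<rho>' es) + (if e \<in> set es then \<rho> e else 0)"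
proof (induction es)
  case Nil then show ?case by simp
next
  case (Cons a es)
  hence IH: "sum_list (map \<rho> es) + (if e \<in> set es then \<rho>' e else 0) = sum_list (map \<rho>' es) + (if e \<in> set es then \<rho> e else 0)"
    by simp
  show ?case
  proof (cases "a = e")
    case True
    hence "e \<notin> set es" using Cons.prems by simp
    hence "sum_list (map \<rho> es) = sum_list (map \<rho>' es)" using IH by simp
    moreover have "e \<in> set (a # es)" using True by simp
    ultimately show ?thesis using True by (simp add: add.commute add.left_commute)
  next
    case False
    hence "\<rho> a = \<rho>' a" using Cons.prems by simp
    then show ?thesis using IH False by simp
  qed
qed

lemma Aev_unique:
  assumes A1: "Aev pos E l B \<rho> x y e" and A2: "Aev pos E l B \<rho>' x y e" and ag: "\<And>z. z \<noteq> e \<Longrightarrow> \<rho> z = \<rho>' z"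
  shows "\<rho> e = \<rho>' e"
proof -
  obtain p q where Lp: "local_shortest pos E l \<rho> B x y p" and Lq: "local_shortest pos E l \<rho> B x y q"
    and ep: "e \<in> set (path_edges p)" and eq: "e \<notin> set (path_edges q)" and N: "pnu \<rho> p = pnu \<rho> q"
    using A1 by (auto simp: Aev_def)
  obtain p' q' where Lp': "local_shortest pos E l \<rho>' B x y p'" and Lq': "local_shortest pos E l \<rho>' B x y q'"
    and ep': "e \<in> set (path_edges p')" and eq': "e \<notin> set (path_edges q')" and N': "pnu \<rho>' p' = pnu \<rho>' q'"
    using A2 by (auto simp: Aev_def)
  have lp: "local_path pos E B x y p" "local_path pos E B x y q" "local_path pos E B x y p'" "local_path pos E B x y q'"
    using Lp Lq Lp' Lq' by (auto simp: local_shortest_def)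
  have dist: "distinct (path_edges z)" if "local_path pos E B x y z" for z
    using that pe_distinct by (auto simp: local_path_def is_path_def)
  have ch: "pnu \<rho> z + (if e \<in> set (path_edges z) then \<rho>' e else 0) = pnu \<rho>' z + (if e \<in> set (path_edges z) then \<rho> e else 0)"
    if "local_path pos E B x y z" for z
    unfolding pnu_def using pnu_change[OF dist[OF that], of e \<rho> \<rho>'] ag by blast
  have min: "\<not> path_shorter l r z u" if "local_shortest pos E l r B x y u" "local_path pos E B x y z" for r z u
    using that by (auto simp: local_shortest_def)
  have len: "plen l p = plen l q" "plen l p = plen l p'" "plen l p = plen l q'"
    using min[OF Lp lp(2)] min[OF Lq lp(1)] min[OF Lp lp(3)] min[OF Lp' lp(1)] min[OF Lp lp(4)] min[OF Lq' lp(1)]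
    by (auto simp: path_shorter_def)
  have q_same: "pnu \<rho>' q = pnu \<rho> q" using ch[OF lp(2)] eq by simp
  have q'_same: "pnu \<rho> q' = pnu \<rho>' q'" using ch[OF lp(4)] eq' by simp
  have "pnu \<rho> p \<le> pnu \<rho> q'" using min[OF Lp lp(4)] len by (auto simp: path_shorter_def)
  moreover have "pnu \<rho>' p' \<le> pnu \<rho>' q" using min[OF Lp' lp(2)] len by (auto simp: path_shorter_def)
  ultimately have NN: "pnu \<rho> p = pnu \<rho>' p'" using N N' q_same q'_same by simp
  have "pnu \<rho> p \<le> pnu \<rho> p'" using min[OF Lp lp(3)] len by (auto simp: path_shorter_def)
  moreover have "pnu \<rho>' p' \<le> pnu \<rho>' p" using min[OF Lp' lp(1)] len by (auto simp: path_shorter_def)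
  moreover have "pnu \<rho> p' + \<rho>' e = pnu \<rho>' p' + \<rho> e" using ch[OF lp(3)] ep' by simp
  moreover have "pnu \<rho> p + \<rho>' e = pnu \<rho>' p + \<rho> e" using ch[OF lp(1)] ep by simp
  ultimately show ?thesis using NN by linarith
qed



lemma is_path_rev: "is_path (E\<inverse>) s v (rev p) \<longleftrightarrow> is_path E v s p"
proof -
  have "set (path_edges (rev p)) \<subseteq> E\<inverse> \<longleftrightarrow> set (path_edges p) \<subseteq> E"
    by (auto simp: pe_rev)
  then show ?thesis unfolding is_path_def by (auto simp: hd_rev last_rev)
qed

lemma local_path_rev: "local_path pos (E\<inverse>) B s v (rev p) \<longleftrightarrow> local_path pos E B v s p"
  by (simp add: local_path_cross is_path_rev cross_rev)

lemma plen_rev: "plen (l \<circ> prod.swap) (rev p) = plen l p"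
  by (simp add: plen_def pe_rev rev_map[symmetric] o_def)

lemma pnu_rev: "pnu (\<rho> \<circ> prod.swap) (rev p) = pnu \<rho> p"
  by (simp add: pnu_def pe_rev rev_map[symmetric] o_def)

lemma shorter_rev: "path_shorter (l \<circ> prod.swap) (\<rho> \<circ> prod.swap) (rev q) (rev p) \<longleftrightarrow> path_shorter l \<rho> q p"
  by (simp add: path_shorter_def plen_rev pnu_rev)

lemma local_shortest_rev:
  "local_shortest pos (E\<inverse>) (l \<circ> prod.swap) (\<rho> \<circ> prod.swap) B s v (rev p) \<longleftrightarrow> local_shortest pos E l \<rho> B v s p"
proof -
  have "(\<exists>q. local_path pos (E\<inverse>) B s v q \<and> path_shorter (l \<circ> prod.swap) (\<rho> \<circ> prod.swap) q (rev p))
     \<longleftrightarrow> (\<exists>q. local_path pos E B v s q \<and> path_shorter l \<rho> q p)"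
    by (metis local_path_rev shorter_rev rev_rev_ident)
  then show ?thesis unfolding local_shortest_def by (simp add: local_path_rev)
qed

lemma lsp_rev: "lsp_not_unique pos E l \<rho> B v s \<Longrightarrow> lsp_not_unique pos (E\<inverse>) (l \<circ> prod.swap) (\<rho> \<circ> prod.swap) B s v"
  unfolding lsp_not_unique_def
  by (metis local_shortest_rev plen_rev pnu_rev rev_rev_ident)

lemma Aev_rev: "Aev pos (E\<inverse>) (l \<circ> prod.swap) B (\<rho> \<circ> prod.swap) s w (a, w) \<Longrightarrow> Aev pos E l B \<rho> w s (w, a)"
proof -
  assume "Aev pos (E\<inverse>) (l \<circ> prod.swap) B (\<rho> \<circ> prod.swap) s w (a, w)"
  then obtain p q where Lp: "local_shortest pos (E\<inverse>) (l \<circ> prod.swap) (\<rho> \<circ> prod.swap) B s w p"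
    and Lq: "local_shortest pos (E\<inverse>) (l \<circ> prod.swap) (\<rho> \<circ> prod.swap) B s w q"
    and e1: "(a, w) \<in> set (path_edges p)" and e2: "(a, w) \<notin> set (path_edges q)"
    and N: "pnu (\<rho> \<circ> prod.swap) p = pnu (\<rho> \<circ> prod.swap) q" unfolding Aev_def by blast
  have "local_shortest pos E l \<rho> B w s (rev p)" using Lp local_shortest_rev[of pos E l \<rho> B s w "rev p"] by simp
  moreover have "local_shortest pos E l \<rho> B w s (rev q)" using Lq local_shortest_rev[of pos E l \<rho> B s w "rev q"] by simp
  moreover have "(w, a) \<in> set (path_edges (rev p))" using e1 by (force simp: pe_rev)
  moreover have "(w, a) \<notin> set (path_edges (rev q))" using e2 by (auto simp: pe_rev)
  moreover have "pnu \<rho> (rev p) = pnu \<rho> (rev q)" using N pnu_rev[of \<rho> "rev p"] pnu_rev[of \<rho> "rev q"] by simp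
  ultimately show ?thesis unfolding Aev_def by blast
qed

lemma core_bwd:
  assumes clB: "closed B" and cvB: "convex B" and sB: "pos s \<in> B" and lpos: "\<forall>e\<in>E. 0 < l e"
    and nu: "lsp_not_unique pos E l \<rho> B v s"
  shows "\<exists>a b w. a \<noteq> b \<and> (w, a) \<in> E \<and> (w, b) \<in> E \<and> Aev pos E l B \<rho> w s (w, a) \<and> Aev pos E l B \<rho> w s (w, b)"
proof -
  have lpos': "\<forall>e\<in>E\<inverse>. 0 < (l \<circ> prod.swap) e" using lpos by auto
  from core_fwd[OF clB cvB sB lpos' lsp_rev[OF nu]]
  obtain a b w where "a \<noteq> b" "(a, w) \<in> E\<inverse>" "(b, w) \<in> E\<inverse>"
    "Aev pos (E\<inverse>) (l \<circ> prod.swap) B (\<rho> \<circ> prod.swap) s w (a, w)"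
    "Aev pos (E\<inverse>) (l \<circ> prod.swap) B (\<rho> \<circ> prod.swap) s w (b, w)" by blast
  then show ?thesis using Aev_rev[of pos E l B \<rho> s w a] Aev_rev[of pos E l B \<rho> s w b] by auto
qed

lemma card_S:
  fixes f :: "'v \<times> 'v \<Rightarrow> 'v"
  assumes fV: "finite V" and fE: "finite E" and fin: "\<forall>e\<in>E. f e \<in> V" and D: "\<forall>w\<in>V. card {e\<in>E. f e = w} \<le> D"
  shows "card {e\<in>E. e \<noteq> (SOME e'. e' \<in> E \<and> f e' = f e)} \<le> card V * (D - 1)"
proof -
  define A where "A w = {e\<in>E. f e = w} - {SOME e'. e' \<in> E \<and> f e' = w}" for w
  have sub: "{e\<in>E. e \<noteq> (SOME e'. e' \<in> E \<and> f e' = f e)} \<subseteq> (\<Union>w\<in>V. A w)"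
    using fin by (auto simp: A_def)
  have cA: "card (A w) \<le> D - 1" if "w \<in> V" for w
  proof (cases "{e\<in>E. f e = w} = {}")
    case True then show ?thesis unfolding A_def by (simp only: True) simp
  next
    case False
    hence "(SOME e'. e' \<in> E \<and> f e' = w) \<in> {e\<in>E. f e = w}" by (metis (mono_tags, lifting) empty_Collect_eq mem_Collect_eq someI)
    hence "card (A w) = card {e\<in>E. f e = w} - 1" unfolding A_def using fE by (simp add: card_Diff_singleton)
    moreover have "card {e\<in>E. f e = w} \<le> D" using D that by blast
    ultimately show ?thesis by linarith
  qed
  have "card {e\<in>E. e \<noteq> (SOME e'. e' \<in> E \<and> f e' = f e)} \<le> card (\<Union>w\<in>V. A w)"
  proof (rule card_mono[OF _ sub])
    have "(\<Union>w\<in>V. A w) \<subseteq> E" by (auto simp: A_def)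
    thus "finite (\<Union>w\<in>V. A w)" using fE finite_subset by blast
  qed
  also have "\<dots> \<le> (\<Sum>w\<in>V. card (A w))" using fV by (rule card_UN_le)
  also have "\<dots> \<le> (\<Sum>w\<in>V. D - 1)" using cA by (intro sum_mono) auto
  also have "\<dots> = card V * (D - 1)" by simp
  finally show ?thesis .
qed

lemma choose2_ge: "D - 1 \<le> (D choose 2)"
proof (cases "D \<le> 1")
  case True then show ?thesis by simp
next
  case False
  hence "2 * (D - 1) \<le> D * (D - 1)" by simp
  hence "D - 1 \<le> D * (D - 1) div 2" by linarith
  then show ?thesis by (simp add: choose_two)
qed



theorem lemma6:
  fixes V :: "'v set" and E :: "('v \<times> 'v) set" and pos :: "'v \<Rightarrow> real \<times> real"
    and l :: "'v \<times> 'v \<Rightarrow> real" and \<tau> :: nat and x0 y0 L :: real and i :: nat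
    and B :: "(real \<times> real) set" and s :: 'v
  assumes "road_network V E pos l"
    and "tight_cover V pos x0 y0 L"
    and "0 < \<tau>"
    and "i \<le> grid_height V pos x0 y0 L"
    and "is_4x4_region x0 y0 L (2 ^ (grid_height V pos x0 y0 L + 2 - i)) B"
    and "s \<in> V" and "pos s \<in> B"
  shows "measure_pmf.prob (Pi_pmf E 0 (\<lambda>_. pmf_of_set {..<\<tau>}))
           {\<rho>. (\<exists>v\<in>V. v \<noteq> s \<and> lsp_not_unique pos E l \<rho> B s v) \<or>
                (\<exists>v\<in>V. v \<noteq> s \<and> lsp_not_unique pos E l \<rho> B v s)}
         \<le> real (max_degree V E choose 2) * 2 * real (card V) / real \<tau>"
proof -
  note rn = assms(1)[unfolded road_network_def]
  have fV: "finite V" and EV: "E \<subseteq> V \<times> V" and lpos: "\<forall>e\<in>E. 0 < l e" using rn by auto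
  have fE: "finite E" using fV EV finite_subset by blast
  have tau: "0 < \<tau>" by fact
  have sB: "pos s \<in> B" by fact
  obtain B1 B2 :: "real set" where B: "B = B1 \<times> B2" and cB: "closed B1" "closed B2" "convex B1" "convex B2"
    using assms(5) unfolding is_4x4_region_def by auto
  have clB: "closed B" using cB B by (simp add: closed_Times)
  have cvB: "convex B" using cB B by (simp add: convex_Times)
  define M where "M = Pi_pmf E 0 (\<lambda>_. pmf_of_set {..<\<tau>})"
  define Sf where "Sf = {e\<in>E. e \<noteq> (SOME e'. e' \<in> E \<and> snd e' = snd e)}"
  define Sb where "Sb = {e\<in>E. e \<noteq> (SOME e'. e' \<in> E \<and> fst e' = fst e)}"
  define Af where "Af e = {\<rho>. Aev pos E l B \<rho> s (snd e) e}" for e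
  define Ab where "Ab e = {\<rho>. Aev pos E l B \<rho> (fst e) s e}" for e
  define \<Delta> where "\<Delta> = max_degree V E"
  let ?Z = "{\<rho>. (\<exists>v\<in>V. v \<noteq> s \<and> lsp_not_unique pos E l \<rho> B s v) \<or>
                (\<exists>v\<in>V. v \<noteq> s \<and> lsp_not_unique pos E l \<rho> B v s)}"
  have sub: "?Z \<subseteq> (\<Union>e\<in>Sf. Af e) \<union> (\<Union>e\<in>Sb. Ab e)"
  proof
    fix \<rho> assume "\<rho> \<in> ?Z"
    then consider v where "lsp_not_unique pos E l \<rho> B s v" | v where "lsp_not_unique pos E l \<rho> B v s" by blast
    then show "\<rho> \<in> (\<Union>e\<in>Sf. Af e) \<union> (\<Union>e\<in>Sb. Ab e)"
    proof cases
      case 1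
      from core_fwd[OF clB cvB sB lpos this] obtain a b w where
        ab: "a \<noteq> b" "(a, w) \<in> E" "(b, w) \<in> E" "Aev pos E l B \<rho> s w (a, w)" "Aev pos E l B \<rho> s w (b, w)"
        by blast
      show ?thesis
      proof (cases "(a, w) = (SOME e'. e' \<in> E \<and> snd e' = w)")
        case True
        moreover have "(b, w) \<noteq> (a, w)" using ab by simp
        ultimately have "(b, w) \<noteq> (SOME e'. e' \<in> E \<and> snd e' = snd (b, w))" by simp
        hence "(b, w) \<in> Sf" using ab unfolding Sf_def by auto
        moreover have "\<rho> \<in> Af (b, w)" using ab by (simp add: Af_def)
        ultimately show ?thesis by blast
      next
        case False
        hence "(a, w) \<in> Sf" using ab unfolding Sf_def by auto
        moreover have "\<rho> \<in> Af (a, w)" using ab by (simp add: Af_def)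
        ultimately show ?thesis by blast
      qed
    next
      case 2
      from core_bwd[OF clB cvB sB lpos this] obtain a b w where
        ab: "a \<noteq> b" "(w, a) \<in> E" "(w, b) \<in> E" "Aev pos E l B \<rho> w s (w, a)" "Aev pos E l B \<rho> w s (w, b)"
        by blast
      show ?thesis
      proof (cases "(w, a) = (SOME e'. e' \<in> E \<and> fst e' = w)")
        case True
        moreover have "(w, b) \<noteq> (w, a)" using ab by simp
        ultimately have "(w, b) \<noteq> (SOME e'. e' \<in> E \<and> fst e' = fst (w, b))" by simp
        hence "(w, b) \<in> Sb" using ab unfolding Sb_def by auto
        moreover have "\<rho> \<in> Ab (w, b)" using ab by (simp add: Ab_def)
        ultimately show ?thesis by blast
      next
        case False
        hence "(w, a) \<in> Sb" using ab unfolding Sb_def by auto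
        moreover have "\<rho> \<in> Ab (w, a)" using ab by (simp add: Ab_def)
        ultimately show ?thesis by blast
      qed
    qed
  qed
  have pA: "measure_pmf.prob M (Af e) \<le> 1 / real \<tau>" if "e \<in> Sf" for e
    unfolding M_def
  proof (rule isolation[OF fE _ tau])
    show "e \<in> E" using that by (simp add: Sf_def)
    show "\<rho> e = \<rho>' e" if "\<rho> \<in> Af e" "\<rho>' \<in> Af e" "\<And>x. x \<noteq> e \<Longrightarrow> \<rho> x = \<rho>' x" for \<rho> \<rho>'
      using Aev_unique[of pos E l B \<rho> s "snd e" e \<rho>'] that by (auto simp: Af_def)
  qed
  have pB: "measure_pmf.prob M (Ab e) \<le> 1 / real \<tau>" if "e \<in> Sb" for e
    unfolding M_def
  proof (rule isolation[OF fE _ tau])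
    show "e \<in> E" using that by (simp add: Sb_def)
    show "\<rho> e = \<rho>' e" if "\<rho> \<in> Ab e" "\<rho>' \<in> Ab e" "\<And>x. x \<noteq> e \<Longrightarrow> \<rho> x = \<rho>' x" for \<rho> \<rho>'
      using Aev_unique[of pos E l B \<rho> "fst e" s e \<rho>'] that by (auto simp: Ab_def)
  qed
  have fSf: "finite Sf" using fE by (simp add: Sf_def)
  have fSb: "finite Sb" using fE by (simp add: Sb_def)
  have degle: "card {e\<in>E. f e = w} \<le> \<Delta>" if "w \<in> V" "f = fst \<or> f = snd" for w and f :: "'v \<times> 'v \<Rightarrow> 'v"
  proof -
    have "card {e\<in>E. f e = w} \<le> degree E w"
      unfolding degree_def using fE that(2) by (intro card_mono) auto
    also have "\<dots> \<le> \<Delta>" unfolding \<Delta>_def max_degree_def using fV that(1) by (intro Max_ge) auto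
    finally show ?thesis .
  qed
  have cSf: "card Sf \<le> card V * (\<Delta> - 1)"
  proof -
    have "\<forall>e\<in>E. snd e \<in> V" using EV by auto
    moreover have "\<forall>w\<in>V. card {e\<in>E. snd e = w} \<le> \<Delta>" using degle by blast
    ultimately show ?thesis unfolding Sf_def using card_S[of V E snd \<Delta>] fV fE by blast
  qed
  have cSb: "card Sb \<le> card V * (\<Delta> - 1)"
  proof -
    have "\<forall>e\<in>E. fst e \<in> V" using EV by auto
    moreover have "\<forall>w\<in>V. card {e\<in>E. fst e = w} \<le> \<Delta>" using degle by blast
    ultimately show ?thesis unfolding Sb_def using card_S[of V E fst \<Delta>] fV fE by blast
  qed
  have "measure_pmf.prob M ?Z \<le> measure_pmf.prob M ((\<Union>e\<in>Sf. Af e) \<union> (\<Union>e\<in>Sb. Ab e))"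
    using sub by (intro measure_pmf.finite_measure_mono) auto
  also have "\<dots> \<le> measure_pmf.prob M (\<Union>e\<in>Sf. Af e) + measure_pmf.prob M (\<Union>e\<in>Sb. Ab e)"
    by (intro measure_Un_le) auto
  also have "\<dots> \<le> (\<Sum>e\<in>Sf. measure_pmf.prob M (Af e)) + (\<Sum>e\<in>Sb. measure_pmf.prob M (Ab e))"
    using fSf fSb by (intro add_mono measure_pmf.finite_measure_subadditive_finite) auto
  also have "\<dots> \<le> (\<Sum>e\<in>Sf. 1 / real \<tau>) + (\<Sum>e\<in>Sb. 1 / real \<tau>)"
    using pA pB by (intro add_mono sum_mono) auto
  also have "\<dots> = (real (card Sf) + real (card Sb)) / real \<tau>" by (simp add: add_divide_distrib)
  also have "\<dots> \<le> real (\<Delta> choose 2) * 2 * real (card V) / real \<tau>"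
  proof -
    have "card Sf + card Sb \<le> (\<Delta> choose 2) * 2 * card V"
    proof -
      have "(\<Delta> choose 2) * 2 * card V = card V * (\<Delta> choose 2) + card V * (\<Delta> choose 2)" by simp
      thus ?thesis using cSf cSb mult_le_mono2[OF choose2_ge[of \<Delta>], of "card V"] by linarith
    qed
    hence "real (card Sf) + real (card Sb) \<le> real (\<Delta> choose 2) * 2 * real (card V)"
      by (metis of_nat_add of_nat_le_iff of_nat_mult of_nat_numeral)
    thus ?thesis using tau by (simp add: divide_right_mono)
  qed
  finally show ?thesis unfolding M_def \<Delta>_def .
qed

end
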